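(* Let $b_n$ be the number of vertices of $\mathscr{BG}_+(n)$. Then $b_n=f_n+1$, where $f_1=0$ and for $n>1$ \[ f_n=\sum_{k=1}^{n-1}\binom{n}{k}\left(2^{2^k-1}-f_k-1\right). \]
   Context: For $N=\{1,\ldots,n\}$, a game is a map $v:2^N\to\mathbb{R}$ with $v(\varnothing)=0$. $\mathscr{BG}_+(n)$ is the polytope (in $\mathbb{R}^{2^N\setminus\{\varnothing,N\}}$) of games $v$ with $v(S)\geqslant 0$ for all $S$, $v(N)=1$, and nonempty core $C(v)=\{x\in\mathbb{R}^N:\sum_{i\in S}x_i\geqslant v(S)\ \forall S,\ \sum_{i\in N}x_i=v(N)\}$. *)

theory Defs
  imports Complex_Main
begin

definition coords :: "nat \<Rightarrow> nat set set" where
  "coords n = {S. S \<subseteq> {1..n} \<and> S \<noteq> {} \<and> S \<noteq> {1..n}}"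

text \<open>A point of R^(2^N \ {empty,N}) is a function nat set => real vanishing off coords n.
  The associated game sets v(empty) = 0 and v(N) = 1.\<close>
definition game_of :: "nat \<Rightarrow> (nat set \<Rightarrow> real) \<Rightarrow> (nat set \<Rightarrow> real)" where
  "game_of n v = (\<lambda>S. if S = {1..n} then 1 else if S = {} then 0 else v S)"

definition core :: "nat \<Rightarrow> (nat set \<Rightarrow> real) \<Rightarrow> (nat \<Rightarrow> real) set" where
  "core n g = {x. (\<forall>S. S \<subseteq> {1..n} \<longrightarrow> (\<Sum>i\<in>S. x i) \<ge> g S)
                 \<and> (\<Sum>i\<in>{1..n}. x i) = g {1..n}}"

definition BG_plus :: "nat \<Rightarrow> (nat set \<Rightarrow> real) set" where
  "BG_plus n = {v. (\<forall>S. S \<notin> coords n \<longrightarrow> v S = 0)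
                 \<and> (\<forall>S\<in>coords n. v S \<ge> 0)
                 \<and> core n (game_of n v) \<noteq> {}}"

definition vertices :: "('a \<Rightarrow> real) set \<Rightarrow> ('a \<Rightarrow> real) set" where
  "vertices P = {x \<in> P. \<not> (\<exists>a\<in>P. \<exists>b\<in>P. \<exists>u::real. a \<noteq> b \<and> 0 < u \<and> u < 1
                    \<and> x = (\<lambda>S. (1 - u) * a S + u * b S))}"

fun fseq :: "nat \<Rightarrow> int" where
  "fseq n = (if n \<le> 1 then 0 else
     (\<Sum>k\<in>{1..<n}. int (n choose k) * (2 ^ (2 ^ k - 1) - fseq k - 1)))"

end

theory Submission
  imports Defs
begin


declare fseq.simps[simp del]

definition CC :: "'a set \<Rightarrow> 'a set set" where "CC A = {S. S \<subseteq> A \<and> S \<noteq> {} \<and> S \<noteq> A}"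
definition DD :: "'a set \<Rightarrow> 'a set set" where "DD A = {S. S \<subseteq> A \<and> S \<noteq> A}"
definition gg :: "'a set \<Rightarrow> nat" where "gg A = card {F. F \<subseteq> CC A \<and> F \<noteq> {} \<and> \<Inter>F \<noteq> {}}"

lemma fin_CC: "finite A \<Longrightarrow> finite (CC A)" unfolding CC_def by auto
lemma fin_DD: "finite A \<Longrightarrow> finite (DD A)" unfolding DD_def by auto

lemma card_DD: "finite B \<Longrightarrow> card (DD B) = 2 ^ card B - 1"
proof -
  assume f: "finite B"
  have "DD B = Pow B - {B}" unfolding DD_def by auto
  then show ?thesis using f by (simp add: card_Pow)
qed

lemma split_B:
  assumes f: "finite B"
  shows "card {G. G \<subseteq> DD B \<and> G \<noteq> {} \<and> \<Inter>G = {}} + gg B + 1 = 2 ^ card (DD B)"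
proof -
  let ?X = "{G. G \<subseteq> DD B \<and> G \<noteq> {} \<and> \<Inter>G = {}}"
  let ?Y = "{F. F \<subseteq> CC B \<and> F \<noteq> {} \<and> \<Inter>F \<noteq> {}}"
  have Y: "?Y = {G. G \<subseteq> DD B \<and> G \<noteq> {} \<and> \<Inter>G \<noteq> {}}"
    unfolding CC_def DD_def by blast
  have P: "Pow (DD B) = ?X \<union> ?Y \<union> {{}}" using Y by auto
  have fP: "finite (Pow (DD B))" using fin_DD[OF f] by simp
  have "card (Pow (DD B)) = card (?X \<union> ?Y) + card {{}::'a set set}"
    unfolding P by (rule card_Un_disjoint) (use fP P in auto)
  also have "card (?X \<union> ?Y) = card ?X + card ?Y"
    by (rule card_Un_disjoint) (use fP P in \<open>auto intro: finite_subset\<close>)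
  finally show ?thesis using fin_DD[OF f] by (simp add: card_Pow gg_def)
qed

lemma fiber:
  assumes f: "finite A" and I: "I \<in> CC A"
  shows "card {F. F \<subseteq> CC A \<and> F \<noteq> {} \<and> \<Inter>F = I} = card {G. G \<subseteq> DD (A - I) \<and> G \<noteq> {} \<and> \<Inter>G = {}}"
proof (rule bij_betw_same_card)
  show "bij_betw (image (\<lambda>S. S - I)) {F. F \<subseteq> CC A \<and> F \<noteq> {} \<and> \<Inter>F = I} {G. G \<subseteq> DD (A - I) \<and> G \<noteq> {} \<and> \<Inter>G = {}}"
  proof (rule bij_betw_byWitness[where f'="image (\<lambda>T. T \<union> I)"])
    show "\<forall>F\<in>{F. F \<subseteq> CC A \<and> F \<noteq> {} \<and> \<Inter>F = I}. (\<lambda>T. T \<union> I) ` (\<lambda>S. S - I) ` F = F"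
    proof
      fix F assume "F \<in> {F. F \<subseteq> CC A \<and> F \<noteq> {} \<and> \<Inter>F = I}"
      then have "\<forall>S\<in>F. I \<subseteq> S" by auto
      then have "(\<lambda>T. T \<union> I) ` (\<lambda>S. S - I) ` F = (\<lambda>S. S) ` F"
        unfolding image_image by (intro image_cong) auto
      then show "(\<lambda>T. T \<union> I) ` (\<lambda>S. S - I) ` F = F" by simp
    qed
    show "\<forall>G\<in>{G. G \<subseteq> DD (A - I) \<and> G \<noteq> {} \<and> \<Inter>G = {}}. (\<lambda>S. S - I) ` (\<lambda>T. T \<union> I) ` G = G"
    proof
      fix G assume "G \<in> {G. G \<subseteq> DD (A - I) \<and> G \<noteq> {} \<and> \<Inter>G = {}}"
      then have "\<forall>T\<in>G. T \<inter> I = {}" unfolding DD_def by auto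
      then have "(\<lambda>S. S - I) ` (\<lambda>T. T \<union> I) ` G = (\<lambda>S. S) ` G"
        unfolding image_image by (intro image_cong) auto
      then show "(\<lambda>S. S - I) ` (\<lambda>T. T \<union> I) ` G = G" by simp
    qed
    show "image (\<lambda>S. S - I) ` {F. F \<subseteq> CC A \<and> F \<noteq> {} \<and> \<Inter>F = I} \<subseteq> {G. G \<subseteq> DD (A - I) \<and> G \<noteq> {} \<and> \<Inter>G = {}}"
    proof
      fix G assume "G \<in> image (\<lambda>S. S - I) ` {F. F \<subseteq> CC A \<and> F \<noteq> {} \<and> \<Inter>F = I}"
      then obtain F where F: "F \<subseteq> CC A" "F \<noteq> {}" "\<Inter>F = I" and G: "G = (\<lambda>S. S - I) ` F" by auto
      have sub: "\<forall>S\<in>F. I \<subseteq> S" using F by auto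
      have "G \<subseteq> DD (A - I)"
      proof
        fix T assume "T \<in> G"
        then obtain S where S: "S \<in> F" "T = S - I" using G by auto
        then have "S \<subseteq> A" "S \<noteq> A" "I \<subseteq> S" using F sub unfolding CC_def by auto
        then show "T \<in> DD (A - I)" unfolding DD_def using S by auto
      qed
      moreover have "\<Inter>G = {}" using F G by auto
      ultimately show "G \<in> {G. G \<subseteq> DD (A - I) \<and> G \<noteq> {} \<and> \<Inter>G = {}}" using F G by auto
    qed
    show "image (\<lambda>T. T \<union> I) ` {G. G \<subseteq> DD (A - I) \<and> G \<noteq> {} \<and> \<Inter>G = {}} \<subseteq> {F. F \<subseteq> CC A \<and> F \<noteq> {} \<and> \<Inter>F = I}"
    proof
      fix F assume "F \<in> image (\<lambda>T. T \<union> I) ` {G. G \<subseteq> DD (A - I) \<and> G \<noteq> {} \<and> \<Inter>G = {}}"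
      then obtain G where G: "G \<subseteq> DD (A - I)" "G \<noteq> {}" "\<Inter>G = {}" and F: "F = (\<lambda>T. T \<union> I) ` G" by auto
      have II: "I \<subseteq> A" "I \<noteq> {}" using I unfolding CC_def by auto
      have "F \<subseteq> CC A"
      proof
        fix S assume "S \<in> F"
        then obtain T where T: "T \<in> G" "S = T \<union> I" using F by auto
        then have "T \<subseteq> A - I" "T \<noteq> A - I" using G unfolding DD_def by auto
        then show "S \<in> CC A" unfolding CC_def using T II by auto
      qed
      moreover have "\<Inter>F = I" using F G by auto
      ultimately show "F \<in> {F. F \<subseteq> CC A \<and> F \<noteq> {} \<and> \<Inter>F = I}" using F G by auto
    qed
  qed
qed

lemma gg_fseq: "finite A \<Longrightarrow> int (gg A) = fseq (card A)"
proof (induction "card A" arbitrary: A rule: less_induct)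
  case less
  note f = less.prems
  show ?case
  proof (cases "card A \<le> 1")
    case True
    have "CC A = {}"
    proof (rule ccontr)
      assume "CC A \<noteq> {}"
      then obtain S where S: "S \<subseteq> A" "S \<noteq> {}" "S \<noteq> A" unfolding CC_def by auto
      then have "S \<subset> A" by auto
      then have "card S < card A" using f by (simp add: psubset_card_mono)
      moreover have "finite S" using S f by (meson finite_subset)
      then have "card S \<ge> 1" using S by (simp add: Suc_leI card_gt_0_iff)
      ultimately show False using True by simp
    qed
    then have "gg A = 0" unfolding gg_def by simp
    moreover have "fseq (card A) = 0" using True by (simp add: fseq.simps)
    ultimately show ?thesis by simp
  next
    case False
    define n where "n = card A"
    define h :: "nat \<Rightarrow> int" where "h k = 2 ^ (2 ^ k - 1) - fseq k - 1" for k
    let ?Y = "{F. F \<subseteq> CC A \<and> F \<noteq> {} \<and> \<Inter>F \<noteq> {}}"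
    let ?Fb = "\<lambda>I. {F. F \<subseteq> CC A \<and> F \<noteq> {} \<and> \<Inter>F = I}"
    have Yeq: "?Y = (\<Union>I\<in>CC A. ?Fb I)"
    proof
      show "?Y \<subseteq> (\<Union>I\<in>CC A. ?Fb I)"
      proof
        fix F assume F: "F \<in> ?Y"
        then obtain S where S: "S \<in> F" by auto
        have "\<Inter>F \<subseteq> S" using S by auto
        then have "\<Inter>F \<in> CC A" using F S unfolding CC_def by auto
        then show "F \<in> (\<Union>I\<in>CC A. ?Fb I)" using F by auto
      qed
      show "(\<Union>I\<in>CC A. ?Fb I) \<subseteq> ?Y" unfolding CC_def by auto
    qed
    have finY: "\<And>I. finite (?Fb I)"
      by (rule finite_subset[of _ "Pow (CC A)"]) (use fin_CC[OF f] in auto)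
    have "gg A = (\<Sum>I\<in>CC A. card (?Fb I))"
      unfolding gg_def Yeq by (rule card_UN_disjoint) (use fin_CC[OF f] finY in auto)
    then have "int (gg A) = (\<Sum>I\<in>CC A. int (card (?Fb I)))" by simp
    also have "\<dots> = (\<Sum>I\<in>CC A. h (card (A - I)))"
    proof (rule sum.cong)
      fix I assume I: "I \<in> CC A"
      have fB: "finite (A - I)" using f by simp
      have "A - I \<subset> A" using I unfolding CC_def by auto
      then have lt: "card (A - I) < card A" using f by (simp add: psubset_card_mono)
      have "card (?Fb I) + gg (A - I) + 1 = 2 ^ card (DD (A - I))"
        by (subst fiber[OF f I]) (rule split_B[OF fB])
      then have "int (card (?Fb I) + gg (A - I) + 1) = int (2 ^ card (DD (A - I)))"
        by (rule arg_cong)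
      then have "int (card (?Fb I)) + int (gg (A - I)) + 1 = 2 ^ card (DD (A - I))"
        by (simp only: of_nat_add of_nat_1 of_nat_power of_nat_numeral)
      moreover have "int (gg (A - I)) = fseq (card (A - I))" using less.hyps[OF lt fB] .
      ultimately show "int (card (?Fb I)) = h (card (A - I))"
        unfolding h_def card_DD[OF fB] by simp
    qed simp
    also have "\<dots> = (\<Sum>B\<in>CC A. h (card B))"
    proof (rule sum.reindex_bij_betw)
      show "bij_betw (\<lambda>I. A - I) (CC A) (CC A)"
        by (rule bij_betw_byWitness[where f'="\<lambda>I. A - I"]) (auto simp: CC_def)
    qed
    also have "CC A = (\<Union>k\<in>{1..<n}. {B. B \<subseteq> A \<and> card B = k})"
    proof
      show "CC A \<subseteq> (\<Union>k\<in>{1..<n}. {B. B \<subseteq> A \<and> card B = k})"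
      proof
        fix B assume B: "B \<in> CC A"
        then have "B \<subset> A" "B \<noteq> {}" unfolding CC_def by auto
        have "card B < n" using \<open>B \<subset> A\<close> f n_def by (simp add: psubset_card_mono)
        moreover have "finite B" using \<open>B \<subset> A\<close> f by (meson finite_subset psubset_imp_subset)
        then have "card B \<ge> 1" using \<open>B \<noteq> {}\<close> by (simp add: Suc_leI card_gt_0_iff)
        ultimately
        show "B \<in> (\<Union>k\<in>{1..<n}. {B. B \<subseteq> A \<and> card B = k})" using \<open>B \<subset> A\<close> by auto
      qed
      show "(\<Union>k\<in>{1..<n}. {B. B \<subseteq> A \<and> card B = k}) \<subseteq> CC A"
        unfolding CC_def n_def by auto
    qed
    also have "(\<Sum>B\<in>(\<Union>k\<in>{1..<n}. {B. B \<subseteq> A \<and> card B = k}). h (card B))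
       = (\<Sum>k\<in>{1..<n}. (\<Sum>B\<in>{B. B \<subseteq> A \<and> card B = k}. h (card B)))"
      by (rule sum.UNION_disjoint) (use f in auto)
    also have "\<dots> = (\<Sum>k\<in>{1..<n}. int (n choose k) * h k)"
    proof (rule sum.cong)
      fix k assume "k \<in> {1..<n}"
      have "(\<Sum>B\<in>{B. B \<subseteq> A \<and> card B = k}. h (card B)) = (\<Sum>B\<in>{B. B \<subseteq> A \<and> card B = k}. h k)"
        by (rule sum.cong) auto
      also have "\<dots> = int (n choose k) * h k" using n_subsets[OF f, of k] n_def by simp
      finally show "(\<Sum>B\<in>{B. B \<subseteq> A \<and> card B = k}. h (card B)) = int (n choose k) * h k" .
    qed simp
    also have "\<dots> = fseq n"
      using False n_def by (subst fseq.simps) (simp add: h_def)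
    finally show ?thesis using n_def by simp
  qed
qed



definition ind :: "nat set set \<Rightarrow> nat set \<Rightarrow> real" where
  "ind F = (\<lambda>S. if S \<in> F then 1 else 0)"

lemma coords_sub: "S \<in> coords n \<Longrightarrow> S \<subseteq> {1..n}" unfolding coords_def by auto
lemma coords_fin: "S \<in> coords n \<Longrightarrow> finite S" using coords_sub finite_subset by blast

lemma inP:
  assumes n: "n \<ge> 1"
    and off: "\<forall>S. S \<notin> coords n \<longrightarrow> v S = 0"
    and xpos: "\<forall>j\<in>{1..n}. x j \<ge> 0" and xs: "sum x {1..n} = 1"
    and bd: "\<forall>S\<in>coords n. 0 \<le> v S \<and> v S \<le> sum x S"
  shows "v \<in> BG_plus n"
proof -
  have "x \<in> core n (game_of n v)"
    unfolding core_def
  proof (intro CollectI conjI allI impI)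
    fix S assume S: "S \<subseteq> {1..n}"
    show "game_of n v S \<le> sum x S"
    proof (cases "S = {1..n}")
      case True then show ?thesis using xs by (simp add: game_of_def)
    next
      case F1: False
      show ?thesis
      proof (cases "S = {}")
        case True then show ?thesis using F1 by (simp add: game_of_def)
      next
        case False
        then have "S \<in> coords n" using S F1 unfolding coords_def by auto
        then show ?thesis using bd F1 False by (simp add: game_of_def)
      qed
    qed
  next
    show "sum x {1..n} = game_of n v {1..n}" using xs by (simp add: game_of_def)
  qed
  then show ?thesis unfolding BG_plus_def using off bd by auto
qed

lemma fromP:
  assumes n: "n \<ge> 1" and v: "v \<in> BG_plus n"
  shows "\<exists>x. (\<forall>j\<in>{1..n}. x j \<ge> 0) \<and> sum x {1..n} = 1 \<and> (\<forall>S\<in>coords n. v S \<le> sum x S)"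
proof -
  obtain x where x: "x \<in> core n (game_of n v)" using v unfolding BG_plus_def by auto
  have le: "\<And>S. S \<subseteq> {1..n} \<Longrightarrow> game_of n v S \<le> sum x S" and
    s: "sum x {1..n} = 1" using x unfolding core_def game_of_def by auto
  have "\<forall>j\<in>{1..n}. x j \<ge> 0"
  proof
    fix j assume j: "j \<in> {1..n}"
    have "game_of n v {j} \<le> x j" using le[of "{j}"] j by simp
    moreover have "game_of n v {j} \<ge> 0"
    proof (cases "{j} = {1..n}")
      case True then show ?thesis by (simp add: game_of_def)
    next
      case False
      then have "{j} \<in> coords n" using j unfolding coords_def by auto
      then show ?thesis using v False unfolding BG_plus_def game_of_def by auto
    qed
    ultimately show "x j \<ge> 0" by linarith
  qed
  moreover have "\<forall>S\<in>coords n. v S \<le> sum x S"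
  proof
    fix S assume S: "S \<in> coords n"
    then have "S \<noteq> {1..n}" "S \<noteq> {}" "S \<subseteq> {1..n}" unfolding coords_def by auto
    then show "v S \<le> sum x S" using le[of S] by (simp add: game_of_def)
  qed
  ultimately show ?thesis using s by blast
qed

lemma P_props:
  assumes n: "n \<ge> 1" and v: "v \<in> BG_plus n" and S: "S \<in> coords n"
  shows "0 \<le> v S" "v S \<le> 1"
proof -
  show "0 \<le> v S" using v S unfolding BG_plus_def by auto
  obtain x where x: "\<forall>j\<in>{1..n}. x j \<ge> 0" "sum x {1..n} = 1" "\<forall>S\<in>coords n. v S \<le> sum x S"
    using fromP[OF n v] by blast
  have "sum x S \<le> sum x {1..n}" using coords_sub[OF S] x(1) by (intro sum_mono2) auto
  then show "v S \<le> 1" using x S by fastforce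
qed

lemma P_off: "v \<in> BG_plus n \<Longrightarrow> S \<notin> coords n \<Longrightarrow> v S = 0" unfolding BG_plus_def by auto

lemma V_sub:
  assumes n: "n \<ge> 1" and F: "F \<subseteq> coords n" "\<Inter>F \<noteq> {}"
  shows "ind F \<in> vertices (BG_plus n)"
proof -
  obtain i where i: "i \<in> {1..n}" "\<forall>S\<in>F. i \<in> S"
  proof (cases "F = {}")
    case True then show ?thesis using that[of 1] n by auto
  next
    case False
    then obtain S0 where "S0 \<in> F" by auto
    moreover obtain i where "i \<in> \<Inter>F" using F by auto
    ultimately show ?thesis using that[of i] F coords_sub by blast
  qed
  define x :: "nat \<Rightarrow> real" where "x = (\<lambda>j. if j = i then 1 else 0)"
  have sx: "finite S \<Longrightarrow> sum x S = (if i \<in> S then 1 else 0)" for S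
    unfolding x_def by simp
  have mem: "ind F \<in> BG_plus n"
  proof (rule inP[OF n, where x = x])
    show "\<forall>S. S \<notin> coords n \<longrightarrow> ind F S = 0" using F unfolding ind_def by auto
    show "\<forall>j\<in>{1..n}. 0 \<le> x j" unfolding x_def by auto
    show "sum x {1..n} = 1" using sx[of "{1..n}"] i by simp
    show "\<forall>S\<in>coords n. 0 \<le> ind F S \<and> ind F S \<le> sum x S"
      using sx coords_fin i unfolding ind_def by auto
  qed
  have "\<not> (\<exists>a\<in>BG_plus n. \<exists>b\<in>BG_plus n. \<exists>u::real. a \<noteq> b \<and> 0 < u \<and> u < 1
                    \<and> ind F = (\<lambda>S. (1 - u) * a S + u * b S))"
  proof
    assume "\<exists>a\<in>BG_plus n. \<exists>b\<in>BG_plus n. \<exists>u::real. a \<noteq> b \<and> 0 < u \<and> u < 1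
                    \<and> ind F = (\<lambda>S. (1 - u) * a S + u * b S)"
    then obtain a b u where ab: "a \<in> BG_plus n" "b \<in> BG_plus n" "a \<noteq> b" "0 < u" "u < 1"
      and eq: "ind F = (\<lambda>S. (1 - u) * a S + u * b S)" by blast
    have "a = b"
    proof
      fix S
      show "a S = b S"
      proof (cases "S \<in> coords n")
        case False then show ?thesis using P_off ab by metis
      next
        case True
        have b: "0 \<le> a S" "a S \<le> 1" "0 \<le> b S" "b S \<le> 1"
          using P_props[OF n ab(1) True] P_props[OF n ab(2) True] by auto
        have e: "ind F S = (1 - u) * a S + u * b S" using eq by metis
        show ?thesis
        proof (cases "S \<in> F")
          case True
          then have "(1 - u) * (1 - a S) + u * (1 - b S) = 0" using e unfolding ind_def by (simp add: algebra_simps)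
          moreover have "(1 - u) * (1 - a S) \<ge> 0" "u * (1 - b S) \<ge> 0" using b ab by auto
          ultimately have "(1 - u) * (1 - a S) = 0" "u * (1 - b S) = 0" by linarith+
          then show ?thesis using ab by auto
        next
          case False
          then have "(1 - u) * a S + u * b S = 0" using e unfolding ind_def by simp
          moreover have "(1 - u) * a S \<ge> 0" "u * b S \<ge> 0" using b ab by auto
          ultimately have "(1 - u) * a S = 0" "u * b S = 0" by linarith+
          then show ?thesis using ab by auto
        qed
      qed
    qed
    then show False using ab by simp
  qed
  then show ?thesis using mem unfolding vertices_def by blast
qed

lemma V_sup:
  assumes n: "n \<ge> 1" and vv: "v \<in> vertices (BG_plus n)"
  shows "\<exists>F. F \<subseteq> coords n \<and> \<Inter>F \<noteq> {} \<and> v = ind F"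
proof -
  have v: "v \<in> BG_plus n" and ext: "\<And>a b u. a \<in> BG_plus n \<Longrightarrow> b \<in> BG_plus n \<Longrightarrow> a \<noteq> b \<Longrightarrow> 0 < u \<Longrightarrow> u < 1
     \<Longrightarrow> v = (\<lambda>S. (1 - u) * a S + u * b S) \<Longrightarrow> False"
    using vv unfolding vertices_def by blast+
  obtain x where x: "\<forall>j\<in>{1..n}. x j \<ge> 0" "sum x {1..n} = 1" "\<forall>S\<in>coords n. v S \<le> sum x S"
    using fromP[OF n v] by blast
  have off: "\<forall>S. S \<notin> coords n \<longrightarrow> v S = 0" using v unfolding BG_plus_def by auto
  have vpos: "\<forall>S\<in>coords n. 0 \<le> v S" using v unfolding BG_plus_def by auto
  have xSpos: "S \<in> coords n \<Longrightarrow> 0 \<le> sum x S" for S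
    using x(1) coords_sub[of S n] by (intro sum_nonneg) auto
  have step1: "\<forall>S\<in>coords n. v S = 0 \<or> v S = sum x S"
  proof (rule ccontr)
    assume "\<not> ?thesis"
    then obtain S where S: "S \<in> coords n" "v S \<noteq> 0" "v S \<noteq> sum x S" by blast
    then have lt: "0 < v S" "v S < sum x S" using vpos x(3) by force+
    define e where "e = min (v S) (sum x S - v S)"
    have e: "0 < e" "e \<le> v S" "e \<le> sum x S - v S" using lt unfolding e_def by auto
    define a where "a = v(S := v S - e)"
    define b where "b = v(S := v S + e)"
    have aP: "a \<in> BG_plus n"
      by (rule inP[OF n _ x(1) x(2)]) (use off vpos x(3) e S in \<open>auto simp: a_def\<close>)
    have bP: "b \<in> BG_plus n"
      by (rule inP[OF n _ x(1) x(2)]) (use off vpos x(3) e S in \<open>auto simp: b_def\<close>)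
    have "a \<noteq> b"
    proof
      assume "a = b" then have "a S = b S" by simp
      then show False using e unfolding a_def b_def by simp
    qed
    moreover have "v = (\<lambda>T. (1 - 1/2) * a T + (1/2) * b T)"
      unfolding a_def b_def by (auto simp: fun_eq_iff field_simps)
    ultimately show False using ext[OF aP bP, of "1/2"] by simp
  qed
  obtain i where i: "i \<in> {1..n}" "x i > 0"
  proof (rule ccontr)
    assume "\<not> thesis"
    then have "\<forall>j\<in>{1..n}. x j \<le> 0" using that by force
    then have "sum x {1..n} \<le> 0" by (intro sum_nonpos) auto
    then show False using x(2) by simp
  qed
  define F where "F = {S \<in> coords n. v S \<noteq> 0}"
  have vF: "v S = (if S \<in> F then sum x S else 0)" for S
    using step1 off unfolding F_def by auto
  have Fc: "F \<subseteq> coords n" unfolding F_def by auto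
  have xi1: "x i \<le> 1"
  proof -
    have "sum x {i} \<le> sum x {1..n}" using x(1) i by (intro sum_mono2) auto
    then show ?thesis using x(2) by simp
  qed
  show ?thesis
  proof (cases "x i = 1")
    case True
    have "sum x ({1..n} - {i}) = 0" using x(2) True sum.remove[of "{1..n}" i x] i by simp
    then have z: "\<forall>j\<in>{1..n} - {i}. x j = 0" using x(1)
      by (subst (asm) sum_nonneg_eq_0_iff) auto
    have sx: "S \<subseteq> {1..n} \<Longrightarrow> sum x S = (if i \<in> S then 1 else 0)" for S
    proof -
      assume S: "S \<subseteq> {1..n}"
      then have "sum x S = sum (\<lambda>j. if j = i then 1 else 0) S"
        using z True by (intro sum.cong) auto
      also have "\<dots> = (if i \<in> S then 1 else 0)" using finite_subset[OF S] by simp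
      finally show ?thesis .
    qed
    define F' where "F' = {S \<in> F. i \<in> S}"
    have "v = ind F'"
    proof
      fix S show "v S = ind F' S"
      proof (cases "S \<in> F")
        case True
        then have "S \<in> coords n" using Fc by blast
        then have "S \<subseteq> {1..n}" by (rule coords_sub)
        then have sS: "sum x S = (if i \<in> S then 1 else 0)" by (rule sx)
        have vS: "v S = sum x S" using True vF[of S] by simp
        show ?thesis
        proof (cases "i \<in> S")
          case True
          then show ?thesis using vS sS \<open>S \<in> F\<close> unfolding ind_def F'_def by simp
        next
          case False
          then show ?thesis using vS sS unfolding ind_def F'_def by simp
        qed
      next
        case False
        then show ?thesis using vF[of S] unfolding ind_def F'_def by auto
      qed
    qed
    moreover have "\<Inter>F' \<noteq> {}"
    proof -
      have "i \<in> \<Inter>F'" unfolding F'_def by blast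
      then show ?thesis by blast
    qed
    moreover have "F' \<subseteq> coords n" using Fc unfolding F'_def by blast
    ultimately show ?thesis by blast
  next
    case False
    then have xi: "0 < x i" "x i < 1" using i xi1 by auto
    define u where "u = x i"
    define F' where "F' = {S \<in> F. i \<in> S}"
    define a where "a = ind F'"
    define y where "y = (\<lambda>j. (x j - (if j = i then x i else 0)) / (1 - x i))"
    have sy: "finite S \<Longrightarrow> sum y S = (sum x S - (if i \<in> S then x i else 0)) / (1 - x i)" for S
      unfolding y_def by (simp add: sum_divide_distrib[symmetric] sum_subtractf)
    define b where "b = (\<lambda>S. if S \<in> F then sum y S else 0)"
    have ypos: "\<forall>j\<in>{1..n}. y j \<ge> 0" using x(1) xi unfolding y_def by auto
    have ys: "sum y {1..n} = 1" using sy[of "{1..n}"] x(2) i xi by simp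
    have ySpos: "S \<in> coords n \<Longrightarrow> 0 \<le> sum y S" for S
      using ypos coords_sub[of S n] by (intro sum_nonneg) auto
    have bP: "b \<in> BG_plus n"
      by (rule inP[OF n _ ypos ys]) (use Fc ySpos in \<open>auto simp: b_def\<close>)
    define e where "e = (\<lambda>j. if j = i then 1 else 0::real)"
    have se: "finite S \<Longrightarrow> sum e S = (if i \<in> S then 1 else 0)" for S
      unfolding e_def by simp
    have aP: "a \<in> BG_plus n"
    proof (rule inP[OF n, where x = e])
      show "\<forall>S. S \<notin> coords n \<longrightarrow> a S = 0" using Fc unfolding a_def ind_def F'_def by auto
      show "\<forall>j\<in>{1..n}. 0 \<le> e j" unfolding e_def by auto
      show "sum e {1..n} = 1" using se[of "{1..n}"] i by simp
      show "\<forall>S\<in>coords n. 0 \<le> a S \<and> a S \<le> sum e S"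
        using se coords_fin unfolding a_def ind_def F'_def by auto
    qed
    have veq: "v = (\<lambda>S. (1 - u) * b S + u * a S)"
    proof
      fix S
      show "v S = (1 - u) * b S + u * a S"
      proof (cases "S \<in> F")
        case True
        then have fS: "finite S" using Fc coords_fin by blast
        have "(1 - u) * b S = sum x S - (if i \<in> S then x i else 0)"
          using True sy[OF fS] xi unfolding b_def u_def by simp
        then show ?thesis using True vF[of S] unfolding a_def ind_def F'_def u_def by auto
      next
        case False
        then show ?thesis using vF[of S] unfolding a_def b_def ind_def F'_def by auto
      qed
    qed
    have "b = a"
    proof (rule ccontr)
      assume "b \<noteq> a"
      moreover have "0 < u" "u < 1" using xi unfolding u_def by auto
      ultimately show False using ext[OF bP aP _ _ _ veq] by blast
    qed
    have "v = a"
    proof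
      fix S
      have "v S = (1 - u) * b S + u * a S" by (subst veq) (rule refl)
      then have "v S = (1 - u) * a S + u * a S" using \<open>b = a\<close> by simp
      then show "v S = a S" by (simp add: algebra_simps)
    qed
    moreover have "\<Inter>F' \<noteq> {}"
    proof -
      have "i \<in> \<Inter>F'" unfolding F'_def by blast
      then show ?thesis by blast
    qed
    moreover have "F' \<subseteq> coords n" using Fc unfolding F'_def by blast
    ultimately show ?thesis unfolding a_def by blast
  qed
qed

lemma coords_CC: "coords n = CC {1..n}" unfolding coords_def CC_def by auto

lemma inj_ind: "inj_on ind X"
proof (rule inj_onI)
  fix F G assume "ind F = ind G"
  then have "\<And>S. ind F S = ind G S" by simp
  then show "F = G" unfolding ind_def by (metis one_neq_zero subsetI subset_antisym)
qed

theorem theorem10: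
  fixes n :: nat
  assumes "n \<ge> 1"
  shows "int (card (vertices (BG_plus n))) = fseq n + 1"
proof -
  let ?X = "{F. F \<subseteq> coords n \<and> \<Inter>F \<noteq> {}}"
  let ?Y = "{F. F \<subseteq> CC {1..n} \<and> F \<noteq> {} \<and> \<Inter>F \<noteq> {}}"
  have V: "vertices (BG_plus n) = ind ` ?X"
  proof
    show "vertices (BG_plus n) \<subseteq> ind ` ?X"
    proof
      fix v assume "v \<in> vertices (BG_plus n)"
      then obtain F where "F \<subseteq> coords n" "\<Inter>F \<noteq> {}" "v = ind F" using V_sup[OF assms] by blast
      then show "v \<in> ind ` ?X" by blast
    qed
    show "ind ` ?X \<subseteq> vertices (BG_plus n)" using V_sub[OF assms] by blast
  qed
  have X: "?X = insert {} ?Y" unfolding coords_CC by auto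
  have fY: "finite ?Y"
    by (rule finite_subset[of _ "Pow (CC {1..n})"]) (use fin_CC[of "{1..n::nat}"] in auto)
  have "card (vertices (BG_plus n)) = card ?X" unfolding V by (rule card_image[OF inj_ind])
  also have "\<dots> = Suc (card ?Y)" unfolding X using fY by (simp add: card_insert_disjoint)
  also have "card ?Y = gg {1..n}" unfolding gg_def ..
  finally have "int (card (vertices (BG_plus n))) = int (gg {1..n}) + 1" by simp
  also have "int (gg {1..n}) = fseq n" using gg_fseq[of "{1..n::nat}"] by simp
  finally show ?thesis .
qed


end
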